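(* Consider the semi-discrete scheme $\frac{d}{dt}\mathbf U_{i,j}=-\frac{\mathcal F_{i+\frac12,j}-\mathcal F_{i-\frac12,j}}{\Delta x}-\frac{\mathcal G_{i,j+\frac12}-\mathcal G_{i,j-\frac12}}{\Delta y}+\mathbf S_{i,j}$ with time-independent bottom values $\mathbf B_{i,j}$ and source $\mathbf S_{i,j}$ as in the context. Suppose the numerical fluxes $\mathcal F_{i+\frac12,j},\mathcal G_{i,j+\frac12}\in\mathbb R^{3K}$ satisfy, for all $i,j$, $$[\![\mathbf V]\!]_{i+\frac12,j}^\top\mathcal F_{i+\frac12,j}=[\![\mathbf\Psi]\!]_{i+\frac12,j}+g[\![\mathbf B]\!]_{i+\frac12,j}^\top\mathcal P(\overline{\mathbf h}_{i+\frac12,j})\overline{\mathbf u}_{i+\frac12,j},\quad [\![\mathbf V]\!]_{i,j+\frac12}^\top\mathcal G_{i,j+\frac12}=[\![\mathbf\Phi]\!]_{i,j+\frac12}+g[\![\mathbf B]\!]_{i,j+\frac12}^\top\mathcal P(\overline{\mathbf h}_{i,j+\frac12})\overline{\mathbf v}_{i,j+\frac12}.$$ Then the scheme is energy conservative: $\frac{d}{dt}\mathbf E_{i,j}=-\frac{\mathcal H_{i+\frac12,j}-\mathcal H_{i-\frac12,j}}{\Delta x}-\frac{\mathcal K_{i,j+\frac12}-\mathcal K_{i,j-\frac12}}{\Delta y}$ for all $i,j$, with numerical energy fluxes $$\mathcal H_{i+\frac12,j}=\overline{\mathbf V}_{i+\frac12,j}^\top\mathcal F_{i+\frac12,j}-\overline{\mathbf\Psi}_{i+\frac12,j}-\tfrac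 g4[\![\mathbf B]\!]_{i+\frac12,j}^\top\mathcal P(\overline{\mathbf h}_{i+\frac12,j})[\![\mathbf u]\!]_{i+\frac12,j},$$ $$\mathcal K_{i,j+\frac12}=\overline{\mathbf V}_{i,j+\frac12}^\top\mathcal G_{i,j+\frac12}-\overline{\mathbf\Phi}_{i,j+\frac12}-\tfrac g4[\![\mathbf B]\!]_{i,j+\frac12}^\top\mathcal P(\overline{\mathbf h}_{i,j+\frac12})[\![\mathbf v]\!]_{i,j+\frac12}.$$
   Context: Let $\mathcal M_k\in\mathbb R^{K\times K}$, $(\mathcal M_k)_{l,m}=\int\phi_k\phi_l\phi_m\rho$, where $\phi_1\equiv1,\dots,\phi_K$ are polynomials orthonormal with respect to a probability density $\rho$; $\mathcal P(\widehat z)=\sum_k\widehat z_k\mathcal M_k$; $g>0$. Uniform rectangular grid with cell sizes $\Delta x,\Delta y$; cell values $\mathbf U_{i,j}=(\mathbf h_{i,j},\mathbf q^x_{i,j},\mathbf q^y_{i,j})\in\mathbb R^{3K}$ with $\mathcal P(\mathbf h_{i,j})$ positive definite, bottom $\mathbf B_{i,j}\in\mathbb R^K$; $\mathbf u_{i,j}=\mathcal P^{-1}(\mathbf h_{i,j})\mathbf q^x_{i,j}$, $\mathbf v_{i,j}=\mathcal P^{-1}(\mathbf h_{i,j})\mathbf q^y_{i,j}$. Averages/jumps: $\overline{\mathbf a}_{i+\frac12,j}=\tfrac12(\mathbf a_{i,j}+\mathbf a_{i+1,j})$, $[\![\mathbf a]\!]_{i+\frac12,j}=\mathbf a_{i+1,j}-\mathbf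 a_{i,j}$, analogously in $j$. Source: $\mathbf S_{i,j}=\Big(0;\ -\tfrac{g}{2\Delta x}\big(\mathcal P(\overline{\mathbf h}_{i+\frac12,j})[\![\mathbf B]\!]_{i+\frac12,j}+\mathcal P(\overline{\mathbf h}_{i-\frac12,j})[\![\mathbf B]\!]_{i-\frac12,j}\big);\ -\tfrac{g}{2\Delta y}\big(\mathcal P(\overline{\mathbf h}_{i,j+\frac12})[\![\mathbf B]\!]_{i,j+\frac12}+\mathcal P(\overline{\mathbf h}_{i,j-\frac12})[\![\mathbf B]\!]_{i,j-\frac12}\big)\Big)$. Discrete entropy quantities: $\mathbf E_{i,j}=\tfrac12\big((\mathbf q^x_{i,j})^\top\mathbf u_{i,j}+(\mathbf q^y_{i,j})^\top\mathbf v_{i,j}\big)+\tfrac12 g\|\mathbf h_{i,j}\|^2+g\mathbf h_{i,j}^\top\mathbf B_{i,j}$; $\mathbf V_{i,j}=(\partial\mathbf E_{i,j}/\partial\mathbf U_{i,j})^\top=\big(-\tfrac12\mathcal P(\mathbf u_{i,j})\mathbf u_{i,j}-\tfrac12\mathcal P(\mathbf v_{i,j})\mathbf v_{i,j}+g(\mathbf h_{i,j}+\mathbf B_{i,j});\ \mathbf u_{i,j};\ \mathbf v_{i,j}\big)$; $\mathbf\Psi_{i,j}=\tfrac12 g\,\mathbf u_{i,j}^\top\mathcal P(\mathbf h_{i,j})\mathbf h_{i,j}$; $\mathbf\Phi_{i,j}=\tfrac12 g\,\mathbf v_{i,j}^\top\mathcal P(\mathbf h_{i,j})\mathbf h_{i,j}$.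 *)

theory Defs
  imports "HOL-Analysis.Analysis" "HOL-Computational_Algebra.Polynomial"
begin

definition prob_density :: "(real \<Rightarrow> real) \<Rightarrow> bool" where
  "prob_density \<rho> \<longleftrightarrow> \<rho> \<in> borel_measurable borel \<and> (\<forall>x. 0 \<le> \<rho> x)
     \<and> integrable lborel \<rho> \<and> (LINT x|lborel. \<rho> x) = 1"

definition orthonormal_basis :: "(real \<Rightarrow> real) \<Rightarrow> ('k \<Rightarrow> real poly) \<Rightarrow> 'k \<Rightarrow> bool" where
  "orthonormal_basis \<rho> \<phi> k0 \<longleftrightarrow> \<phi> k0 = 1
     \<and> (\<forall>l m. integrable lborel (\<lambda>x. poly (\<phi> l) x * poly (\<phi> m) x * \<rho> x))
     \<and> (\<forall>k l m. integrable lborel (\<lambda>x. poly (\<phi> k) x * poly (\<phi> l) x * poly (\<phi> m) x * \<rho> x))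
     \<and> (\<forall>l m. (LINT x|lborel. poly (\<phi> l) x * poly (\<phi> m) x * \<rho> x) = (if l = m then 1 else 0))"

definition Mmat :: "(real \<Rightarrow> real) \<Rightarrow> ('k::finite \<Rightarrow> real poly) \<Rightarrow> 'k \<Rightarrow> real^'k^'k" where
  "Mmat \<rho> \<phi> k = (\<chi> l m. LINT x|lborel. poly (\<phi> k) x * poly (\<phi> l) x * poly (\<phi> m) x * \<rho> x)"

definition Pmat :: "(real \<Rightarrow> real) \<Rightarrow> ('k::finite \<Rightarrow> real poly) \<Rightarrow> real^'k \<Rightarrow> real^'k^'k" where
  "Pmat \<rho> \<phi> z = (\<Sum>k\<in>UNIV. (z $ k) *\<^sub>R Mmat \<rho> \<phi> k)"

definition pos_def :: "real^'n^'n \<Rightarrow> bool" where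
  "pos_def A \<longleftrightarrow> (\<forall>x. x \<noteq> 0 \<longrightarrow> 0 < x \<bullet> (A *v x))"

definition vel :: "(real^'k \<Rightarrow> real^'k^'k) \<Rightarrow> real^'k \<Rightarrow> real^'k \<Rightarrow> real^'k" where
  "vel P h q = matrix_inv (P h) *v q"

definition avg :: "'a::real_vector \<Rightarrow> 'a \<Rightarrow> 'a" where
  "avg a b = (1/2) *\<^sub>R (a + b)"

definition energy :: "(real^'k \<Rightarrow> real^'k^'k) \<Rightarrow> real \<Rightarrow> real^'k \<Rightarrow> real^'k \<Rightarrow> real^'k \<Rightarrow> real^'k \<Rightarrow> real" where
  "energy P g h qx qy B =
     (1/2) * (qx \<bullet> vel P h qx + qy \<bullet> vel P h qy) + (1/2) * g * (norm h)\<^sup>2 + g * (h \<bullet> B)"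

text \<open>entropy variables V = (dE/dU)^T\<close>
definition entvar :: "(real^'k \<Rightarrow> real^'k^'k) \<Rightarrow> real \<Rightarrow> real^'k \<Rightarrow> real^'k \<Rightarrow> real^'k \<Rightarrow> real^'k
     \<Rightarrow> (real^'k) \<times> (real^'k) \<times> (real^'k)" where
  "entvar P g h qx qy B =
     (let u = vel P h qx; v = vel P h qy in
      (- (1/2) *\<^sub>R (P u *v u) - (1/2) *\<^sub>R (P v *v v) + g *\<^sub>R (h + B), u, v))"

text \<open>Psi (with q = q^x) and Phi (with q = q^y)\<close>
definition pflux :: "(real^'k \<Rightarrow> real^'k^'k) \<Rightarrow> real \<Rightarrow> real^'k \<Rightarrow> real^'k \<Rightarrow> real" where
  "pflux P g h q = (1/2) * g * (vel P h q \<bullet> (P h *v h))"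

section \<open>Grid-level quantities. Grid fields h, qx, qy, B :: int => int => real^'k (at a fixed time);
  F i j stands for F_{i+1/2,j} and G i j for G_{i,j+1/2}.\<close>

type_synonym 'k field = "int \<Rightarrow> int \<Rightarrow> real^'k"
type_synonym 'k triple = "(real^'k) \<times> (real^'k) \<times> (real^'k)"

definition source :: "(real^'k \<Rightarrow> real^'k^'k) \<Rightarrow> real \<Rightarrow> real \<Rightarrow> real \<Rightarrow> 'k field \<Rightarrow> 'k field
    \<Rightarrow> int \<Rightarrow> int \<Rightarrow> 'k triple" where
  "source P g dx dy h B i j =
    (0,
     - (g / (2 * dx)) *\<^sub>R (P (avg (h i j) (h (i+1) j)) *v (B (i+1) j - B i j)
                         + P (avg (h (i-1) j) (h i j)) *v (B i j - B (i-1) j)),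
     - (g / (2 * dy)) *\<^sub>R (P (avg (h i j) (h i (j+1))) *v (B i (j+1) - B i j)
                         + P (avg (h i (j-1)) (h i j)) *v (B i j - B i (j-1))))"

definition flux_cond_x :: "(real^'k \<Rightarrow> real^'k^'k) \<Rightarrow> real \<Rightarrow> 'k field \<Rightarrow> 'k field \<Rightarrow> 'k field
    \<Rightarrow> 'k field \<Rightarrow> 'k triple \<Rightarrow> int \<Rightarrow> int \<Rightarrow> bool" where
  "flux_cond_x P g h qx qy B Fx i j \<longleftrightarrow>
     (entvar P g (h (i+1) j) (qx (i+1) j) (qy (i+1) j) (B (i+1) j)
        - entvar P g (h i j) (qx i j) (qy i j) (B i j)) \<bullet> Fx
     = pflux P g (h (i+1) j) (qx (i+1) j) - pflux P g (h i j) (qx i j)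
       + g * ((B (i+1) j - B i j) \<bullet> (P (avg (h i j) (h (i+1) j))
                *v avg (vel P (h i j) (qx i j)) (vel P (h (i+1) j) (qx (i+1) j))))"

definition flux_cond_y :: "(real^'k \<Rightarrow> real^'k^'k) \<Rightarrow> real \<Rightarrow> 'k field \<Rightarrow> 'k field \<Rightarrow> 'k field
    \<Rightarrow> 'k field \<Rightarrow> 'k triple \<Rightarrow> int \<Rightarrow> int \<Rightarrow> bool" where
  "flux_cond_y P g h qx qy B Gy i j \<longleftrightarrow>
     (entvar P g (h i (j+1)) (qx i (j+1)) (qy i (j+1)) (B i (j+1))
        - entvar P g (h i j) (qx i j) (qy i j) (B i j)) \<bullet> Gy
     = pflux P g (h i (j+1)) (qy i (j+1)) - pflux P g (h i j) (qy i j)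
       + g * ((B i (j+1) - B i j) \<bullet> (P (avg (h i j) (h i (j+1)))
                *v avg (vel P (h i j) (qy i j)) (vel P (h i (j+1)) (qy i (j+1)))))"

definition Hflux :: "(real^'k \<Rightarrow> real^'k^'k) \<Rightarrow> real \<Rightarrow> 'k field \<Rightarrow> 'k field \<Rightarrow> 'k field
    \<Rightarrow> 'k field \<Rightarrow> 'k triple \<Rightarrow> int \<Rightarrow> int \<Rightarrow> real" where
  "Hflux P g h qx qy B Fx i j =
     avg (entvar P g (h i j) (qx i j) (qy i j) (B i j))
         (entvar P g (h (i+1) j) (qx (i+1) j) (qy (i+1) j) (B (i+1) j)) \<bullet> Fx
     - avg (pflux P g (h i j) (qx i j)) (pflux P g (h (i+1) j) (qx (i+1) j))
     - (g / 4) * ((B (i+1) j - B i j) \<bullet> (P (avg (h i j) (h (i+1) j))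
                *v (vel P (h (i+1) j) (qx (i+1) j) - vel P (h i j) (qx i j))))"

definition Kflux :: "(real^'k \<Rightarrow> real^'k^'k) \<Rightarrow> real \<Rightarrow> 'k field \<Rightarrow> 'k field \<Rightarrow> 'k field
    \<Rightarrow> 'k field \<Rightarrow> 'k triple \<Rightarrow> int \<Rightarrow> int \<Rightarrow> real" where
  "Kflux P g h qx qy B Gy i j =
     avg (entvar P g (h i j) (qx i j) (qy i j) (B i j))
         (entvar P g (h i (j+1)) (qx i (j+1)) (qy i (j+1)) (B i (j+1))) \<bullet> Gy
     - avg (pflux P g (h i j) (qy i j)) (pflux P g (h i (j+1)) (qy i (j+1)))
     - (g / 4) * ((B i (j+1) - B i j) \<bullet> (P (avg (h i j) (h i (j+1)))
                *v (vel P (h i (j+1)) (qy i (j+1)) - vel P (h i j) (qy i j))))"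

end

theory Submission
  imports Defs
begin

lemma Pmat_nth: "Pmat \<rho> \<phi> z $ l $ m = (\<Sum>k\<in>UNIV. z$k * Mmat \<rho> \<phi> k $ l $ m)"
  by (simp add: Pmat_def)

lemma Mmat_sym1: "Mmat \<rho> \<phi> k $ l $ m = Mmat \<rho> \<phi> l $ k $ m"
  by (simp add: Mmat_def ac_simps)
lemma Mmat_sym2: "Mmat \<rho> \<phi> k $ l $ m = Mmat \<rho> \<phi> k $ m $ l"
  by (simp add: Mmat_def ac_simps)

lemma inner_Pmat: "a \<bullet> (Pmat \<rho> \<phi> z *v c) =
   (\<Sum>l\<in>UNIV. \<Sum>m\<in>UNIV. \<Sum>k\<in>UNIV. z$k * a$l * c$m * Mmat \<rho> \<phi> k $ l $ m)"
  by (simp add: inner_vec_def matrix_vector_mult_def Pmat_nth sum_distrib_left sum_distrib_right ac_simps)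

lemma Pmat_sym: "a \<bullet> (Pmat \<rho> \<phi> z *v c) = c \<bullet> (Pmat \<rho> \<phi> z *v a)"
proof -
  have "c \<bullet> (Pmat \<rho> \<phi> z *v a) = (\<Sum>l\<in>UNIV. \<Sum>m\<in>UNIV. \<Sum>k\<in>UNIV. z$k * a$m * c$l * Mmat \<rho> \<phi> k $ m $ l)"
    unfolding inner_Pmat
    by (rule sum.cong[OF refl])+ (subst Mmat_sym2, simp add: ac_simps)
  also have "\<dots> = a \<bullet> (Pmat \<rho> \<phi> z *v c)"
    unfolding inner_Pmat by (rule sum.swap)
  finally show ?thesis by simp
qed

lemma Pmat_tensor: "a \<bullet> (Pmat \<rho> \<phi> z *v c) = z \<bullet> (Pmat \<rho> \<phi> a *v c)"
proof -
  have "z \<bullet> (Pmat \<rho> \<phi> a *v c) = (\<Sum>l\<in>UNIV. \<Sum>m\<in>UNIV. \<Sum>k\<in>UNIV. z$l * a$k * c$m * Mmat \<rho> \<phi> l $ k $ m)"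
    unfolding inner_Pmat
    by (rule sum.cong[OF refl])+ (subst Mmat_sym1, simp add: ac_simps)
  also have "\<dots> = (\<Sum>l\<in>UNIV. \<Sum>k\<in>UNIV. \<Sum>m\<in>UNIV. z$l * a$k * c$m * Mmat \<rho> \<phi> l $ k $ m)"
    by (rule sum.cong[OF refl]) (rule sum.swap)
  also have "\<dots> = (\<Sum>k\<in>UNIV. \<Sum>l\<in>UNIV. \<Sum>m\<in>UNIV. z$l * a$k * c$m * Mmat \<rho> \<phi> l $ k $ m)"
    by (rule sum.swap)
  also have "\<dots> = a \<bullet> (Pmat \<rho> \<phi> z *v c)"
    unfolding inner_Pmat by (rule sum.cong[OF refl]) (rule sum.swap)
  finally show ?thesis by simp
qed

lemma Pmat_add: "Pmat \<rho> \<phi> (x + y) = Pmat \<rho> \<phi> x + Pmat \<rho> \<phi> y"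
  by (simp add: Pmat_def scaleR_add_left sum.distrib)
lemma Pmat_scale: "Pmat \<rho> \<phi> (c *\<^sub>R x) = c *\<^sub>R Pmat \<rho> \<phi> x"
  by (simp add: Pmat_def scaleR_sum_right)

lemma bilin: "bilinear (\<lambda>z w. Pmat \<rho> \<phi> z *v w)"
  unfolding bilinear_def
  apply (intro conjI allI)
   apply (rule matrix_vector_mul_linear)
  apply (rule linearI)
   apply (simp add: Pmat_add matrix_vector_mult_add_rdistrib)
  apply (simp add: Pmat_scale vec_eq_iff matrix_vector_mult_def sum_distrib_left ac_simps)
  done

lemma bbilin: "bounded_bilinear (\<lambda>z w. Pmat \<rho> \<phi> z *v (w::real^'k::finite))"
  using bilin bilinear_conv_bounded_bilinear by blast

lemma avg_split1: "avg a b = a + (1/2) *\<^sub>R (b - a)"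
  by (simp add: avg_def algebra_simps) (simp flip: scaleR_add_left)
lemma avg_split2: "avg a b = b - (1/2) *\<^sub>R (b - a)"
  by (simp add: avg_def algebra_simps) (simp flip: scaleR_add_left)

lemma xalg:
  fixes Vi Vp Vm F1 F0 :: "(real^'k::finite) \<times> (real^'k) \<times> (real^'k)"
  assumes c1: "(Vp - Vi) \<bullet> F1 = Sp - Si + g * ((Bp - Bi) \<bullet> (Pmat \<rho> \<phi> hp *v avg ui up))"
    and c0: "(Vi - Vm) \<bullet> F0 = Si - Sm + g * ((Bi - Bm) \<bullet> (Pmat \<rho> \<phi> hm *v avg um ui))"
  shows "Vi \<bullet> (F1 - F0) + (g/2) * (ui \<bullet> (Pmat \<rho> \<phi> hp *v (Bp - Bi) + Pmat \<rho> \<phi> hm *v (Bi - Bm)))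
    = (avg Vi Vp \<bullet> F1 - avg Si Sp - (g/4) * ((Bp - Bi) \<bullet> (Pmat \<rho> \<phi> hp *v (up - ui))))
    - (avg Vm Vi \<bullet> F0 - avg Sm Si - (g/4) * ((Bi - Bm) \<bullet> (Pmat \<rho> \<phi> hm *v (ui - um))))"
proof -
  have e1: "avg Vi Vp \<bullet> F1 = Vi \<bullet> F1 + (1/2) * ((Vp - Vi) \<bullet> F1)"
    by (simp add: avg_split1 inner_add_left)
  have e0: "avg Vm Vi \<bullet> F0 = Vi \<bullet> F0 - (1/2) * ((Vi - Vm) \<bullet> F0)"
    by (simp add: avg_split2 inner_diff_left)
  define X1 where "X1 = (Bp - Bi) \<bullet> (Pmat \<rho> \<phi> hp *v ui)"
  define Y1 where "Y1 = (Bp - Bi) \<bullet> (Pmat \<rho> \<phi> hp *v up)"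
  define X0 where "X0 = (Bi - Bm) \<bullet> (Pmat \<rho> \<phi> hm *v ui)"
  define Y0 where "Y0 = (Bi - Bm) \<bullet> (Pmat \<rho> \<phi> hm *v um)"
  have a1: "(Bp - Bi) \<bullet> (Pmat \<rho> \<phi> hp *v avg ui up) = (X1 + Y1)/2"
    by (simp add: X1_def Y1_def avg_def matrix_vector_mult_scaleR matrix_vector_right_distrib inner_add_right)
  have a0: "(Bi - Bm) \<bullet> (Pmat \<rho> \<phi> hm *v avg um ui) = (X0 + Y0)/2"
    by (simp add: X0_def Y0_def avg_def matrix_vector_mult_scaleR matrix_vector_right_distrib inner_add_right)
  have d1: "(Bp - Bi) \<bullet> (Pmat \<rho> \<phi> hp *v (up - ui)) = Y1 - X1"
    by (simp add: X1_def Y1_def matrix_vector_mult_diff_distrib inner_diff_right)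
  have d0: "(Bi - Bm) \<bullet> (Pmat \<rho> \<phi> hm *v (ui - um)) = X0 - Y0"
    by (simp add: X0_def Y0_def matrix_vector_mult_diff_distrib inner_diff_right)
  have s: "ui \<bullet> (Pmat \<rho> \<phi> hp *v (Bp - Bi) + Pmat \<rho> \<phi> hm *v (Bi - Bm)) = X1 + X0"
    by (simp add: X1_def X0_def inner_add_right Pmat_sym[of ui])
  show ?thesis
    unfolding e1 e0 c1 c0 a1 a0 d1 d0 s
    by (simp add: avg_def inner_diff_right algebra_simps) (simp add: field_simps)
qed

lemma posdef_det: fixes A :: "real^'k::finite^'k" assumes "pos_def A" shows "det A \<noteq> 0"
proof -
  have "inj ((*v) A)"
  proof (rule injI)
    fix x y assume "A *v x = A *v y"
    then have "A *v (x - y) = 0" by (simp add: matrix_vector_mult_diff_distrib)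
    then show "x = y" using assms unfolding pos_def_def
      by (metis inner_zero_right less_irrefl right_minus_eq)
  qed
  then show ?thesis
    using det_nz_iff_inj[of "(*v) A"] matrix_vector_mul_linear
    by (simp add: matrix_of_matrix_vector_mul)
qed

lemma inv_right: fixes A :: "real^'k::finite^'k" assumes "det A \<noteq> 0"
  shows "A *v (matrix_inv A *v q) = q"
proof -
  have "invertible A" using assms invertible_det_nz by blast
  then have "A ** matrix_inv A = mat 1 \<and> matrix_inv A ** A = mat 1"
    unfolding invertible_def matrix_inv_def by (rule someI_ex)
  then show ?thesis by (simp add: matrix_vector_mul_assoc)
qed

lemma differentiable_prod_real:
  fixes f :: "'i \<Rightarrow> real \<Rightarrow> real"
  assumes "finite I" "\<forall>i\<in>I. f i differentiable (at x)"
  shows "(\<lambda>x. \<Prod>i\<in>I. f i x) differentiable (at x)"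
  using assms by (induction I rule: finite_induct) auto

lemma differentiable_det:
  fixes M :: "real \<Rightarrow> real^'k::finite^'k"
  assumes "\<And>i j. (\<lambda>s. M s $ i $ j) differentiable (at t)"
  shows "(\<lambda>s. det (M s)) differentiable (at t)"
  unfolding det_def
  by (intro differentiable_sum ballI differentiable_mult differentiable_const differentiable_prod_real)
     (auto intro: assms)

lemma vec_expand: "(x::real^'k::finite) = (\<Sum>k\<in>UNIV. (x $ k) *\<^sub>R axis k 1)"
  by (simp add: vec_eq_iff axis_def sum_component if_distrib cong: if_cong)

lemma differentiable_vec_comp:
  fixes f :: "real \<Rightarrow> real^'k::finite"
  assumes "\<And>k. (\<lambda>s. f s $ k) differentiable (at t)"
  shows "f differentiable (at t)"
proof -
  have e: "f = (\<lambda>s. \<Sum>k\<in>UNIV. (f s $ k) *\<^sub>R axis k 1)"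
    by (rule ext, rule vec_expand)
  have "(\<lambda>s. \<Sum>k\<in>UNIV. (f s $ k) *\<^sub>R axis k 1) differentiable (at t)"
    by (intro differentiable_sum ballI differentiable_scaleR differentiable_const assms) auto
  then show ?thesis by (subst e)
qed

lemma differentiable_nth:
  fixes f :: "real \<Rightarrow> real^'k::finite"
  assumes "f differentiable (at t)"
  shows "(\<lambda>s. f s $ k) differentiable (at t)"
  using assms unfolding differentiable_def
  using bounded_linear.has_derivative[OF bounded_linear_vec_nth] by blast

lemma vel_deriv:
  fixes h q :: "real \<Rightarrow> real^'k::finite"
  assumes pd: "\<And>s. pos_def (Pmat \<rho> \<phi> (h s))"
    and dh: "(h has_vector_derivative Dh) (at t)" and dq: "(q has_vector_derivative Dq) (at t)"
  obtains u' where "((\<lambda>s. vel (Pmat \<rho> \<phi>) (h s) (q s)) has_vector_derivative u') (at t)"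
    "Pmat \<rho> \<phi> (h t) *v u' = Dq - Pmat \<rho> \<phi> Dh *v vel (Pmat \<rho> \<phi>) (h t) (q t)"
proof -
  let ?A = "\<lambda>s. Pmat \<rho> \<phi> (h s)"
  let ?u = "\<lambda>s. vel (Pmat \<rho> \<phi>) (h s) (q s)"
  have det: "\<And>s. det (?A s) \<noteq> 0" using pd posdef_det by blast
  have eq: "\<And>s. ?A s *v ?u s = q s" unfolding vel_def using inv_right[OF det] .
  have cr: "\<And>s. ?u s = (\<chi> k. det(\<chi> i j. if j=k then q s$i else ?A s$i$j) / det (?A s))"
    using cramer[OF det] eq by blast
  have hd: "h differentiable (at t)" using dh differentiableI_vector by blast
  have qd: "q differentiable (at t)" using dq differentiableI_vector by blast
  have Ad: "\<And>i j. (\<lambda>s. ?A s $ i $ j) differentiable (at t)"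
    unfolding Pmat_nth
    by (intro differentiable_sum ballI differentiable_mult differentiable_const differentiable_nth hd) auto
  have Md: "(\<lambda>s. (\<chi> i j. if j=k then q s$i else ?A s$i$j) $ i $ j) differentiable (at t)" for k i j
    by (cases "j = k") (simp_all add: Ad differentiable_nth[OF qd])
  have ud: "?u differentiable (at t)"
  proof (rule differentiable_vec_comp)
    fix k
    show "(\<lambda>s. ?u s $ k) differentiable (at t)"
      unfolding cr vec_lambda_beta
      by (intro differentiable_divide differentiable_det Md Ad det)
  qed
  then have u': "(?u has_vector_derivative (vector_derivative ?u (at t))) (at t)"
    using vector_derivative_works by blast
  have "((\<lambda>s. ?A s *v ?u s) has_vector_derivative
      (?A t *v vector_derivative ?u (at t) + Pmat \<rho> \<phi> Dh *v ?u t)) (at t)"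
    using bounded_bilinear.has_vector_derivative[OF bbilin dh u'] by simp
  then have "(q has_vector_derivative
      (?A t *v vector_derivative ?u (at t) + Pmat \<rho> \<phi> Dh *v ?u t)) (at t)"
    unfolding eq by simp
  then have "?A t *v vector_derivative ?u (at t) + Pmat \<rho> \<phi> Dh *v ?u t = Dq"
    using vector_derivative_unique_at dq by blast
  then show ?thesis using that u' by (simp add: algebra_simps)
qed

lemma inner_deriv:
  fixes f g :: "real \<Rightarrow> 'a::real_inner"
  assumes "(f has_vector_derivative f') (at t)" "(g has_vector_derivative g') (at t)"
  shows "((\<lambda>s. f s \<bullet> g s) has_real_derivative (f t \<bullet> g' + f' \<bullet> g t)) (at t)"
  using bounded_bilinear.has_vector_derivative[OF bounded_bilinear_inner assms]
  by (simp add: has_real_derivative_iff_has_vector_derivative)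

lemma kin_deriv:
  fixes h q :: "real \<Rightarrow> real^'k::finite"
  assumes pd: "\<And>s. pos_def (Pmat \<rho> \<phi> (h s))"
    and dh: "(h has_vector_derivative Dh) (at t)" and dq: "(q has_vector_derivative Dq) (at t)"
  shows "((\<lambda>s. q s \<bullet> vel (Pmat \<rho> \<phi>) (h s) (q s)) has_real_derivative
     (2 * (vel (Pmat \<rho> \<phi>) (h t) (q t) \<bullet> Dq)
      - Dh \<bullet> (Pmat \<rho> \<phi> (vel (Pmat \<rho> \<phi>) (h t) (q t)) *v vel (Pmat \<rho> \<phi>) (h t) (q t)))) (at t)"
proof -
  let ?u = "vel (Pmat \<rho> \<phi>) (h t) (q t)"
  obtain u' where u': "((\<lambda>s. vel (Pmat \<rho> \<phi>) (h s) (q s)) has_vector_derivative u') (at t)"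
    and eq: "Pmat \<rho> \<phi> (h t) *v u' = Dq - Pmat \<rho> \<phi> Dh *v ?u"
    using vel_deriv[OF pd dh dq] by blast
  have qt: "q t = Pmat \<rho> \<phi> (h t) *v ?u"
    unfolding vel_def using inv_right[OF posdef_det[OF pd]] by simp
  have "q t \<bullet> u' = ?u \<bullet> (Pmat \<rho> \<phi> (h t) *v u')"
    by (subst qt, subst inner_commute, rule Pmat_sym)
  also have "\<dots> = ?u \<bullet> Dq - Dh \<bullet> (Pmat \<rho> \<phi> ?u *v ?u)"
    unfolding eq inner_diff_right by (simp add: Pmat_tensor[where a="?u" and z=Dh])
  finally have k: "q t \<bullet> u' = ?u \<bullet> Dq - Dh \<bullet> (Pmat \<rho> \<phi> ?u *v ?u)" .
  show ?thesis
    using inner_deriv[OF dq u'] k by (simp add: inner_commute[of Dq])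
qed

lemma energy_deriv:
  fixes h qx qy :: "real \<Rightarrow> real^'k::finite" and B :: "real^'k"
  assumes pd: "\<And>s. pos_def (Pmat \<rho> \<phi> (h s))"
    and d: "((\<lambda>s. (h s, qx s, qy s)) has_vector_derivative D) (at t)"
  shows "((\<lambda>s. energy (Pmat \<rho> \<phi>) g (h s) (qx s) (qy s) B) has_real_derivative
     (entvar (Pmat \<rho> \<phi>) g (h t) (qx t) (qy t) B \<bullet> D)) (at t)"
proof -
  obtain Dh Dqx Dqy where D: "D = (Dh, Dqx, Dqy)" by (cases D) auto
  have d': "((\<lambda>s. (h s, qx s, qy s)) has_derivative (\<lambda>x. x *\<^sub>R D)) (at t)"
    using d by (simp add: has_vector_derivative_def)
  have dh: "(h has_vector_derivative Dh) (at t)"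
    using has_derivative_fst[OF d'] by (simp add: has_vector_derivative_def D)
  have dqx: "(qx has_vector_derivative Dqx) (at t)"
    using has_derivative_fst[OF has_derivative_snd[OF d']] by (simp add: has_vector_derivative_def D)
  have dqy: "(qy has_vector_derivative Dqy) (at t)"
    using has_derivative_snd[OF has_derivative_snd[OF d']] by (simp add: has_vector_derivative_def D)
  let ?u = "vel (Pmat \<rho> \<phi>) (h t) (qx t)"
  let ?v = "vel (Pmat \<rho> \<phi>) (h t) (qy t)"
  note e1 = kin_deriv[OF pd dh dqx]
  note e2 = kin_deriv[OF pd dh dqy]
  note e3 = inner_deriv[OF dh dh]
  note e4 = inner_deriv[OF dh has_vector_derivative_const[of B]]
  have en: "(\<lambda>s. energy (Pmat \<rho> \<phi>) g (h s) (qx s) (qy s) B) =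
     (\<lambda>s. (1/2) * (qx s \<bullet> vel (Pmat \<rho> \<phi>) (h s) (qx s) + qy s \<bullet> vel (Pmat \<rho> \<phi>) (h s) (qy s))
        + (1/2) * g * (h s \<bullet> h s) + g * (h s \<bullet> B))"
    by (simp add: energy_def power2_norm_eq_inner)
  have "((\<lambda>s. (1/2) * (qx s \<bullet> vel (Pmat \<rho> \<phi>) (h s) (qx s) + qy s \<bullet> vel (Pmat \<rho> \<phi>) (h s) (qy s))
        + (1/2) * g * (h s \<bullet> h s) + g * (h s \<bullet> B)) has_real_derivative
     (1/2) * ((2 * (?u \<bullet> Dqx) - Dh \<bullet> (Pmat \<rho> \<phi> ?u *v ?u)) + (2 * (?v \<bullet> Dqy) - Dh \<bullet> (Pmat \<rho> \<phi> ?v *v ?v)))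
     + (1/2) * g * (h t \<bullet> Dh + Dh \<bullet> h t) + g * (h t \<bullet> 0 + Dh \<bullet> B)) (at t)"
    by (intro DERIV_add DERIV_cmult e1 e2 e3 e4)
  then show ?thesis
    unfolding en
    by (simp add: D entvar_def Let_def inner_add_left inner_diff_left inner_add_right
        inner_commute[of Dh] algebra_simps)
qed

lemma combine:
  fixes V F1 F0 G1 G0 :: "(real^'k::finite) \<times> (real^'k) \<times> (real^'k)"
  assumes V: "V = (a, ui, vi)" and dx: "dx \<noteq> 0" and dy: "dy \<noteq> 0"
    and X: "V \<bullet> (F1 - F0) + (g/2) * (ui \<bullet> X) = H1 - H0"
    and Y: "V \<bullet> (G1 - G0) + (g/2) * (vi \<bullet> Y) = K1 - K0"
  shows "V \<bullet> (- (1/dx) *\<^sub>R (F1 - F0) - (1/dy) *\<^sub>R (G1 - G0)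
      + (0, - (g / (2 * dx)) *\<^sub>R X, - (g / (2 * dy)) *\<^sub>R Y)) = - (H1 - H0) / dx - (K1 - K0) / dy"
proof -
  have "V \<bullet> (- (1/dx) *\<^sub>R (F1 - F0) - (1/dy) *\<^sub>R (G1 - G0)
      + (0, - (g / (2 * dx)) *\<^sub>R X, - (g / (2 * dy)) *\<^sub>R Y))
     = - (1/dx) * (V \<bullet> (F1 - F0)) - (1/dy) * (V \<bullet> (G1 - G0))
       + (- (g / (2 * dx)) * (ui \<bullet> X) - (g / (2 * dy)) * (vi \<bullet> Y))"
    by (simp only: inner_add_right inner_diff_right inner_scaleR_right V inner_Pair inner_zero_right
        inner_minus_right)
  also have "\<dots> = - (H1 - H0) / dx - (K1 - K0) / dy"
  proof -
    have X': "V \<bullet> (F1 - F0) = (H1 - H0) - (g/2) * (ui \<bullet> X)" using X by linarith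
    have Y': "V \<bullet> (G1 - G0) = (K1 - K0) - (g/2) * (vi \<bullet> Y)" using Y by linarith
    show ?thesis unfolding X' Y' using dx dy by (simp add: field_simps)
  qed
  finally show ?thesis .
qed

theorem lemma4p4:
  fixes \<rho> :: "real \<Rightarrow> real" and \<phi> :: "'k::finite \<Rightarrow> real poly" and k0 :: 'k
    and g dx dy :: real
    and h qx qy :: "int \<Rightarrow> int \<Rightarrow> real \<Rightarrow> real^'k"
    and B :: "int \<Rightarrow> int \<Rightarrow> real^'k"
    and F G :: "int \<Rightarrow> int \<Rightarrow> real \<Rightarrow> (real^'k) \<times> (real^'k) \<times> (real^'k)"
  assumes rho: "prob_density \<rho>"
    and phi: "orthonormal_basis \<rho> \<phi> k0"
    and g: "g > 0" and dx: "dx > 0" and dy: "dy > 0"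
    and posdef: "\<And>i j t. pos_def (Pmat \<rho> \<phi> (h i j t))"
    and scheme: "\<And>i j t. ((\<lambda>s. (h i j s, qx i j s, qy i j s)) has_vector_derivative
         (- (1/dx) *\<^sub>R (F i j t - F (i-1) j t) - (1/dy) *\<^sub>R (G i j t - G i (j-1) t)
          + source (Pmat \<rho> \<phi>) g dx dy (\<lambda>i j. h i j t) B i j)) (at t)"
    and fluxF: "\<And>i j t. flux_cond_x (Pmat \<rho> \<phi>) g (\<lambda>i j. h i j t) (\<lambda>i j. qx i j t)
         (\<lambda>i j. qy i j t) B (F i j t) i j"
    and fluxG: "\<And>i j t. flux_cond_y (Pmat \<rho> \<phi>) g (\<lambda>i j. h i j t) (\<lambda>i j. qx i j t)
         (\<lambda>i j. qy i j t) B (G i j t) i j"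
  shows "((\<lambda>s. energy (Pmat \<rho> \<phi>) g (h i j s) (qx i j s) (qy i j s) (B i j)) has_real_derivative
      (- (Hflux (Pmat \<rho> \<phi>) g (\<lambda>i j. h i j t) (\<lambda>i j. qx i j t) (\<lambda>i j. qy i j t) B (F i j t) i j
          - Hflux (Pmat \<rho> \<phi>) g (\<lambda>i j. h i j t) (\<lambda>i j. qx i j t) (\<lambda>i j. qy i j t) B (F (i-1) j t) (i-1) j) / dx
       - (Kflux (Pmat \<rho> \<phi>) g (\<lambda>i j. h i j t) (\<lambda>i j. qx i j t) (\<lambda>i j. qy i j t) B (G i j t) i j
          - Kflux (Pmat \<rho> \<phi>) g (\<lambda>i j. h i j t) (\<lambda>i j. qx i j t) (\<lambda>i j. qy i j t) B (G i (j-1) t) i (j-1)) / dy))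
    (at t)"
proof -
  let ?P = "Pmat \<rho> \<phi>"
  let ?V = "\<lambda>i j. entvar ?P g (h i j t) (qx i j t) (qy i j t) (B i j)"
  let ?u = "\<lambda>i j. vel ?P (h i j t) (qx i j t)"
  let ?v = "\<lambda>i j. vel ?P (h i j t) (qy i j t)"
  let ?Psi = "\<lambda>i j. pflux ?P g (h i j t) (qx i j t)"
  let ?Phi = "\<lambda>i j. pflux ?P g (h i j t) (qy i j t)"
  have X: "?V i j \<bullet> (F i j t - F (i-1) j t) + (g/2) * (?u i j \<bullet>
      (?P (avg (h i j t) (h (i+1) j t)) *v (B (i+1) j - B i j)
       + ?P (avg (h (i-1) j t) (h i j t)) *v (B i j - B (i-1) j)))
     = Hflux (Pmat \<rho> \<phi>) g (\<lambda>i j. h i j t) (\<lambda>i j. qx i j t) (\<lambda>i j. qy i j t) B (F i j t) i j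
          - Hflux (Pmat \<rho> \<phi>) g (\<lambda>i j. h i j t) (\<lambda>i j. qx i j t) (\<lambda>i j. qy i j t) B (F (i-1) j t) (i-1) j"
  proof -
    have c1: "(?V (i+1) j - ?V i j) \<bullet> F i j t = ?Psi (i+1) j - ?Psi i j
        + g * ((B (i+1) j - B i j) \<bullet> (?P (avg (h i j t) (h (i+1) j t)) *v avg (?u i j) (?u (i+1) j)))"
      using fluxF[where i=i and j=j and t=t] by (simp add: flux_cond_x_def)
    have c0: "(?V i j - ?V (i-1) j) \<bullet> F (i-1) j t = ?Psi i j - ?Psi (i-1) j
        + g * ((B i j - B (i-1) j) \<bullet> (?P (avg (h (i-1) j t) (h i j t)) *v avg (?u (i-1) j) (?u i j)))"
      using fluxF[where i="i-1" and j=j and t=t] by (simp add: flux_cond_x_def)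
    show ?thesis using xalg[OF c1 c0] unfolding Hflux_def by simp
  qed
  have Y: "?V i j \<bullet> (G i j t - G i (j-1) t) + (g/2) * (?v i j \<bullet>
      (?P (avg (h i j t) (h i (j+1) t)) *v (B i (j+1) - B i j)
       + ?P (avg (h i (j-1) t) (h i j t)) *v (B i j - B i (j-1))))
     = Kflux (Pmat \<rho> \<phi>) g (\<lambda>i j. h i j t) (\<lambda>i j. qx i j t) (\<lambda>i j. qy i j t) B (G i j t) i j
          - Kflux (Pmat \<rho> \<phi>) g (\<lambda>i j. h i j t) (\<lambda>i j. qx i j t) (\<lambda>i j. qy i j t) B (G i (j-1) t) i (j-1)"
  proof -
    have c1: "(?V i (j+1) - ?V i j) \<bullet> G i j t = ?Phi i (j+1) - ?Phi i j
        + g * ((B i (j+1) - B i j) \<bullet> (?P (avg (h i j t) (h i (j+1) t)) *v avg (?v i j) (?v i (j+1))))"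
      using fluxG[where i=i and j=j and t=t] by (simp add: flux_cond_y_def)
    have c0: "(?V i j - ?V i (j-1)) \<bullet> G i (j-1) t = ?Phi i j - ?Phi i (j-1)
        + g * ((B i j - B i (j-1)) \<bullet> (?P (avg (h i (j-1) t) (h i j t)) *v avg (?v i (j-1)) (?v i j)))"
      using fluxG[where i=i and j="j-1" and t=t] by (simp add: flux_cond_y_def)
    show ?thesis using xalg[OF c1 c0] unfolding Kflux_def by simp
  qed
  have Vf: "?V i j = (fst (?V i j), ?u i j, ?v i j)" by (simp add: entvar_def Let_def)
  have eq: "?V i j \<bullet> (- (1/dx) *\<^sub>R (F i j t - F (i-1) j t) - (1/dy) *\<^sub>R (G i j t - G i (j-1) t)
          + source (Pmat \<rho> \<phi>) g dx dy (\<lambda>i j. h i j t) B i j) =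
      - (Hflux (Pmat \<rho> \<phi>) g (\<lambda>i j. h i j t) (\<lambda>i j. qx i j t) (\<lambda>i j. qy i j t) B (F i j t) i j
          - Hflux (Pmat \<rho> \<phi>) g (\<lambda>i j. h i j t) (\<lambda>i j. qx i j t) (\<lambda>i j. qy i j t) B (F (i-1) j t) (i-1) j) / dx
       - (Kflux (Pmat \<rho> \<phi>) g (\<lambda>i j. h i j t) (\<lambda>i j. qx i j t) (\<lambda>i j. qy i j t) B (G i j t) i j
          - Kflux (Pmat \<rho> \<phi>) g (\<lambda>i j. h i j t) (\<lambda>i j. qx i j t) (\<lambda>i j. qy i j t) B (G i (j-1) t) i (j-1)) / dy"
    unfolding source_def
    by (rule combine[OF Vf _ _ X Y]) (use dx dy in auto)
  have pd: "\<And>s. pos_def (Pmat \<rho> \<phi> (h i j s))" using posdef by blast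
  show ?thesis
    using energy_deriv[OF pd scheme[where i=i and j=j and t=t], of g "B i j"] unfolding eq .
qed

end
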